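(* Let $N>1$ be an integer and $v=2^N$. For $1\le i\le N$ let $A_i\subseteq\mathbb{Z}_{2^N}$ be the set of residues $t\in\{0,\dots,2^N-1\}$ with $t \bmod 2^i\in\{0,1,\dots,2^{i-1}-1\}$ (i.e. the binary sequence of $A_i$ consists of a block of $2^{i-1}$ ones followed by $2^{i-1}$ zeros, repeated $2^{N-i}$ times). Then $\{A_1,\dots,A_N\}$ is a $(2^N,N,2^{N-1},2^{N-2})$-PSEDF in $\mathbb{Z}_{2^N}$. In particular, a $(2^N, N, 2^{N-1}, 2^{N-2})$-PSEDF exists in $\mathbb{Z}_{2^N}$.
   Context: Groups are written additively. For subsets $A,B$ of a group $G$, $\Delta(A,B)$ denotes the multiset $\{a-b: a\in A, b\in B\}$. For a group $G$ of order $v$ and $m>1$, a family of $k$-subsets $\{A_1,\dots,A_m\}$ of $G$ is a $(v,m,k,\lambda)$-PSEDF (pairwise strong external difference family) if for every pair $i\neq j$ the multiset $\Delta(A_i,A_j)$ contains every element of $G$ exactly $\lambda$ times (the sets need not be disjoint). *)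

theory Defs
  imports Main
begin

text \<open>The cyclic group Z_v is modelled by the residues {0..<v} (as integers) with
  addition/subtraction modulo v.\<close>

definition cyc :: "nat \<Rightarrow> int set" where
  "cyc v = {0..<int v}"

text \<open>Multiplicity of g in the multiset Delta(A,B) = {a - b : a in A, b in B} in Z_v.\<close>
definition delta_count :: "nat \<Rightarrow> int set \<Rightarrow> int set \<Rightarrow> int \<Rightarrow> nat" where
  "delta_count v A B g = card {(a, b). a \<in> A \<and> b \<in> B \<and> (a - b) mod int v = g}"

definition is_PSEDF :: "nat \<Rightarrow> nat \<Rightarrow> nat \<Rightarrow> nat \<Rightarrow> (nat \<Rightarrow> int set) \<Rightarrow> bool" where
  "is_PSEDF v m k lam A \<longleftrightarrow>
     m > 1 \<and>
     (\<forall>i\<in>{1..m}. A i \<subseteq> cyc v \<and> card (A i) = k) \<and>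
     (\<forall>i\<in>{1..m}. \<forall>j\<in>{1..m}. i \<noteq> j \<longrightarrow>
        (\<forall>g\<in>cyc v. delta_count v (A i) (A j) g = lam))"

definition blockset :: "nat \<Rightarrow> nat \<Rightarrow> int set" where
  "blockset N i = {t \<in> cyc (2 ^ N). t mod 2 ^ i \<in> {0..<2 ^ (i - 1)}}"

end

theory Submission
  imports Defs
begin

definition PP :: "nat \<Rightarrow> int \<Rightarrow> bool" where
  "PP k t \<longleftrightarrow> t mod 2^k < 2^(k-1)"

lemma blockset_eq: "blockset N i = {t \<in> cyc (2^N). PP i t}"
  unfolding blockset_def PP_def by auto

lemma Pmod: "k \<le> N \<Longrightarrow> PP k (t mod 2^N) \<longleftrightarrow> PP k t"
  unfolding PP_def
  by (metis le_imp_power_dvd mod_mod_cancel)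

lemma Ppres: "l < k \<Longrightarrow> k \<le> N \<Longrightarrow> PP l ((t + 2^(k-1)) mod 2^N) \<longleftrightarrow> PP l t"
proof -
  assume a: "l < k" "k \<le> N"
  have "PP l ((t + 2^(k-1)) mod 2^N) \<longleftrightarrow> PP l (t + 2^(k-1))" using a Pmod by simp
  moreover have "(t + 2^(k-1)) mod (2::int)^l = t mod 2^l"
  proof -
    have "(2::int)^l dvd 2^(k-1)" using a by (intro le_imp_power_dvd) simp
    then show ?thesis by (metis dvd_imp_mod_0 mod_add_right_eq add.right_neutral)
  qed
  ultimately show ?thesis unfolding PP_def by simp
qed

lemma flip_aux: "(m::int) > 0 \<Longrightarrow> (t + m) mod (2*m) < m \<longleftrightarrow> \<not> (t mod (2*m) < m)"
proof -
  assume m: "m > 0"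
  define r where "r = t mod (2*m)"
  have r: "0 \<le> r" "r < 2*m" using m by (auto simp: r_def)
  have e: "(t + m) mod (2*m) = (r + m) mod (2*m)" by (simp add: r_def mod_simps)
  show ?thesis
  proof (cases "r < m")
    case True
    then have "(r + m) mod (2*m) = r + m" using r by (intro mod_pos_pos_trivial) auto
    then show ?thesis unfolding e r_def[symmetric] using True r by simp
  next
    case False
    have "(r + m) mod (2*m) = (r - m + 2*m) mod (2*m)" by (rule arg_cong[where f="\<lambda>x. x mod (2*m)"]) simp
    also have "\<dots> = (r - m) mod (2*m)" by (rule mod_add_self2)
    also have "\<dots> = r - m" using r False by (intro mod_pos_pos_trivial) auto
    finally show ?thesis unfolding e r_def[symmetric] using False r by simp
  qed
qed

lemma Pflip: "1 \<le> k \<Longrightarrow> k \<le> N \<Longrightarrow> PP k ((t + 2^(k-1)) mod 2^N) \<longleftrightarrow> \<not> PP k t"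
proof -
  assume a: "1 \<le> k" "k \<le> N"
  have "PP k ((t + 2^(k-1)) mod 2^N) \<longleftrightarrow> PP k (t + 2^(k-1))" using a Pmod by simp
  moreover have "(2::int)^k = 2 * 2^(k-1)" using a
    by (metis Suc_diff_1 less_le_trans power_Suc zero_less_one)
  ultimately show ?thesis unfolding PP_def using flip_aux[of "(2::int)^(k-1)" t] by simp
qed

lemma half:
  assumes "finite Y" "inj_on f Y" "f ` Y \<subseteq> Y" "\<forall>b\<in>Y. X (f b) \<longleftrightarrow> \<not> X b"
  shows "2 * card {b\<in>Y. X b} = card Y"
proof -
  let ?A = "{b\<in>Y. X b}" let ?B = "{b\<in>Y. \<not> X b}"
  have "card ?A \<le> card ?B"
    by (rule card_inj_on_le[of f]) (use assms in \<open>auto intro: inj_on_subset\<close>)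
  moreover have "card ?B \<le> card ?A"
    by (rule card_inj_on_le[of f]) (use assms in \<open>auto intro: inj_on_subset\<close>)
  moreover have "card Y = card ?A + card ?B"
  proof -
    have "Y = ?A \<union> ?B" by auto
    then have "card Y = card (?A \<union> ?B)" by simp
    also have "\<dots> = card ?A + card ?B" using assms(1) by (intro card_Un_disjoint) auto
    finally show ?thesis .
  qed
  ultimately show ?thesis by linarith
qed

lemma tr_inj: "inj_on (\<lambda>b. (b + c) mod (2^N)) (cyc (2^N))"
proof (rule inj_onI)
  fix x y assume x: "x \<in> cyc (2^N)" and y: "y \<in> cyc (2^N)"
    and e: "(x + c) mod 2 ^ N = (y + c) mod (2::int) ^ N"
  have "x mod 2^N = y mod 2^N" using e by (metis add_diff_cancel_right' mod_diff_left_eq)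
  moreover have "x mod 2^N = x" "y mod 2^N = y" using x y by (auto simp: cyc_def)
  ultimately show "x = y" by simp
qed

lemma tr_img: "(\<lambda>b. (b + c) mod (2^N)) ` (cyc (2^N)) \<subseteq> cyc (2^N)"
  by (auto simp: cyc_def)

lemma fin_cyc: "finite (cyc v)" by (simp add: cyc_def)

lemma card_cyc: "card (cyc v) = v" by (simp add: cyc_def)

lemma count_g:
  assumes "1 \<le> k" "k \<le> N"
  shows "2 * card {b \<in> cyc (2^N). PP k ((g + b) mod 2^N)} = 2^N"
proof -
  have "2 * card {b \<in> cyc (2^N). PP k ((g + b) mod 2^N)} = card (cyc (2^N))"
  proof (rule half[OF fin_cyc tr_inj[of "2^(k-1)" N] tr_img])
    show "\<forall>b\<in>cyc (2 ^ N). PP k ((g + (b + 2 ^ (k - 1)) mod 2 ^ N) mod 2 ^ N) = (\<not> PP k ((g + b) mod 2 ^ N))"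
    proof
      fix b
      have "(g + (b + 2 ^ (k - 1)) mod 2 ^ N) mod (2::int) ^ N = ((g + b) + 2^(k-1)) mod 2^N"
        by (simp add: mod_simps add.assoc)
      then show "PP k ((g + (b + 2 ^ (k - 1)) mod 2 ^ N) mod 2 ^ N) = (\<not> PP k ((g + b) mod 2 ^ N))"
        using Pflip[OF assms, of "g+b"] Pmod[OF assms(2)] by simp
    qed
  qed
  then show ?thesis by (simp add: card_cyc)
qed

lemma card_block:
  assumes "1 \<le> k" "k \<le> N"
  shows "2 * card {b \<in> cyc (2^N). PP k b} = 2^N"
proof -
  have "{b \<in> cyc (2^N). PP k b} = {b \<in> cyc (2^N). PP k ((0 + b) mod 2^N)}"
    by (auto simp: cyc_def)
  then show ?thesis using count_g[OF assms, of 0] by simp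
qed

lemma two_half: assumes "N > 1" "2 * (x::nat) = 2^(N-1)" shows "x = 2^(N-2)"
proof -
  have "N-1 = Suc (N-2)" using assms by simp
  then have "(2::nat)^(N-1) = 2*2^(N-2)" by simp
  then show ?thesis using assms by simp
qed

lemma two_half': assumes "N > 1" "2 * (x::nat) = 2^N" shows "x = 2^(N-1)"
proof -
  have "N = Suc (N-1)" using assms by simp
  then have "(2::nat)^N = 2*2^(N-1)" by (metis power_Suc)
  then show ?thesis using assms by simp
qed

lemma delta_eq:
  assumes g: "g \<in> cyc (2^N)"
  shows "delta_count (2^N) (blockset N i) (blockset N j) g
       = card {b \<in> cyc (2^N). PP j b \<and> PP i ((g + b) mod 2^N)}"
proof -
  let ?S = "{b \<in> cyc (2^N). PP j b \<and> PP i ((g + b) mod 2^N)}"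
  have "{(a, b). a \<in> blockset N i \<and> b \<in> blockset N j \<and> (a - b) mod int (2^N) = g}
        = (\<lambda>b. ((g + b) mod 2^N, b)) ` ?S"
  proof (rule set_eqI)
    fix p :: "int \<times> int"
    obtain a b where p: "p = (a, b)" by (cases p)
    show "p \<in> {(a, b). a \<in> blockset N i \<and> b \<in> blockset N j \<and> (a - b) mod int (2^N) = g}
        \<longleftrightarrow> p \<in> (\<lambda>b. ((g + b) mod 2^N, b)) ` ?S"
    proof
      assume "p \<in> {(a, b). a \<in> blockset N i \<and> b \<in> blockset N j \<and> (a - b) mod int (2^N) = g}"
      then have a: "a \<in> blockset N i" and b: "b \<in> blockset N j"
        and e: "(a - b) mod int (2 ^ N) = g" by (auto simp: p)
      have am: "a mod 2^N = a" using a by (auto simp: blockset_def cyc_def)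
      have "a mod 2^N = (g + b) mod 2^N" using e
        by (metis diff_add_cancel mod_add_left_eq of_nat_numeral of_nat_power)
      then have ae: "a = (g + b) mod 2^N" using am by simp
      show "p \<in> (\<lambda>b. ((g + b) mod 2 ^ N, b)) ` ?S"
      proof (rule image_eqI[where x=b])
        show "p = ((g + b) mod 2 ^ N, b)" using ae p by simp
        show "b \<in> ?S" using a b ae by (auto simp: blockset_eq)
      qed
    next
      assume "p \<in> (\<lambda>b. ((g + b) mod 2^N, b)) ` ?S"
      then obtain c where c: "c \<in> ?S" and pc: "p = ((g + c) mod 2^N, c)" by blast
      have 1: "(g + c) mod 2 ^ N \<in> blockset N i" "c \<in> blockset N j"
        using c by (auto simp: blockset_eq cyc_def)
      have "((g + c) mod 2 ^ N - c) mod 2^N = g mod (2::int)^N" by (simp add: mod_simps)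
      also have "\<dots> = g" using g by (auto simp: cyc_def)
      finally have "((g + c) mod 2 ^ N - c) mod int (2 ^ N) = g" by simp
      then show "p \<in> {(a, b). a \<in> blockset N i \<and> b \<in> blockset N j \<and> (a - b) mod int (2^N) = g}"
        using 1 pc by simp
    qed
  qed
  moreover have "inj_on (\<lambda>b. ((g + b) mod 2^N, b)) ?S" by (auto intro: inj_onI)
  ultimately show ?thesis unfolding delta_count_def by (simp add: card_image)
qed

theorem theorem3p5:
  fixes N :: nat
  assumes "N > 1"
  shows "is_PSEDF (2 ^ N) N (2 ^ (N - 1)) (2 ^ (N - 2)) (blockset N)
         \<and> (\<exists>A. is_PSEDF (2 ^ N) N (2 ^ (N - 1)) (2 ^ (N - 2)) A)"
proof -
  have P: "is_PSEDF (2 ^ N) N (2 ^ (N - 1)) (2 ^ (N - 2)) (blockset N)"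
    unfolding is_PSEDF_def
  proof (intro conjI ballI impI)
    show "1 < N" by fact
  next
    fix i assume i: "i \<in> {1..N}"
    show "blockset N i \<subseteq> cyc (2 ^ N)" by (auto simp: blockset_def)
    show "card (blockset N i) = 2 ^ (N - 1)"
      using card_block[of i N] i two_half'[OF assms] by (auto simp: blockset_eq)
  next
    fix i j g assume i: "i \<in> {1..N}" and j: "j \<in> {1..N}" and ij: "i \<noteq> j"
      and g: "g \<in> cyc (2^N)"
    let ?S = "{b \<in> cyc (2^N). PP j b \<and> PP i ((g + b) mod 2^N)}"
    have "2 * card ?S = 2^(N-1)"
    proof (cases "j < i")
      case True
      let ?Y = "{b \<in> cyc (2^N). PP j b}"
      have "2 * card {b\<in>?Y. PP i ((g + b) mod 2^N)} = card ?Y"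
      proof (rule half)
        show "finite ?Y" by (simp add: fin_cyc)
        show "inj_on (\<lambda>b. (b + 2^(i-1)) mod 2^N) ?Y"
          by (rule inj_on_subset[OF tr_inj]) auto
        show "(\<lambda>b. (b + 2^(i-1)) mod 2^N) ` ?Y \<subseteq> ?Y"
          using tr_img[of "2^(i-1)" N] Ppres[of j i N] True i by auto
        show "\<forall>b\<in>?Y. PP i ((g + (b + 2^(i-1)) mod 2^N) mod 2^N) \<longleftrightarrow> \<not> PP i ((g + b) mod 2^N)"
        proof
          fix b
          have "(g + (b + 2 ^ (i - 1)) mod 2 ^ N) mod (2::int) ^ N = ((g + b) + 2^(i-1)) mod 2^N"
            by (simp add: mod_simps add.assoc)
          then show "PP i ((g + (b + 2^(i-1)) mod 2^N) mod 2^N) \<longleftrightarrow> \<not> PP i ((g + b) mod 2^N)"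
            using Pflip[of i N "g+b"] Pmod[of i N] i by simp
        qed
      qed
      moreover have "card ?Y = 2^(N-1)" using card_block[of j N] j two_half'[OF assms] by auto
      moreover have "{b\<in>?Y. PP i ((g + b) mod 2^N)} = ?S" by auto
      ultimately show ?thesis by simp
    next
      case False
      then have ji: "i < j" using ij by simp
      let ?Y = "{b \<in> cyc (2^N). PP i ((g + b) mod 2^N)}"
      have "2 * card {b\<in>?Y. PP j b} = card ?Y"
      proof (rule half)
        show "finite ?Y" by (simp add: fin_cyc)
        show "inj_on (\<lambda>b. (b + 2^(j-1)) mod 2^N) ?Y"
          by (rule inj_on_subset[OF tr_inj]) auto
        have e: "(g + (b + 2 ^ (j - 1)) mod 2 ^ N) mod (2::int) ^ N = ((g + b) + 2^(j-1)) mod 2^N" for b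
          by (simp add: mod_simps add.assoc)
        show "(\<lambda>b. (b + 2^(j-1)) mod 2^N) ` ?Y \<subseteq> ?Y"
        proof
          fix x assume "x \<in> (\<lambda>b. (b + 2^(j-1)) mod 2^N) ` ?Y"
          then obtain b where b: "b \<in> ?Y" and x: "x = (b + 2^(j-1)) mod 2^N" by auto
          have "x \<in> cyc (2^N)" using tr_img[of "2^(j-1)" N] b x by auto
          moreover have "PP i ((g + x) mod 2^N)"
            using b x e[of b] Ppres[of i j N "g+b"] ji j Pmod[of i N "g+b"] by simp
          ultimately show "x \<in> ?Y" by simp
        qed
        show "\<forall>b\<in>?Y. PP j ((b + 2^(j-1)) mod 2^N) \<longleftrightarrow> \<not> PP j b"
          using Pflip[of j N] j by auto
      qed
      moreover have "card ?Y = 2^(N-1)" using count_g[of i N g] i two_half'[OF assms] by auto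
      moreover have "{b\<in>?Y. PP j b} = ?S" by auto
      ultimately show ?thesis by simp
    qed
    then show "delta_count (2 ^ N) (blockset N i) (blockset N j) g = 2 ^ (N - 2)"
      using delta_eq[OF g] two_half[OF assms] by simp
  qed
  then show ?thesis by blast
qed

end
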